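(* Let $a=p/q\geq1$ be rational with $p,q$ coprime, and let $(d,e;m)\in\mathcal{E}$. Define the error vector $\varepsilon$ by $m=\frac{d+e}{\sqrt{2a}}\,w(a)+\varepsilon$ (vectors padded with zeros to a common length). Then: (i) $\mu(d,e;m)(a)\leq\frac{\sqrt{2de+1}\sqrt a}{d+e}$. In particular $\mu(d,d;m)(a)\leq\sqrt{1+\frac{1}{2d^2}}\sqrt{\frac a2}$, and if $e=d-1$ then $\mu(d,e;m)(a)\leq\sqrt{1+\frac{1}{(2d-1)^2}}\sqrt{\frac a2}$. (ii) $\mu(d,e;m)(a)>\sqrt{a/2}$ if and only if $\langle\varepsilon,w(a)\rangle>0$. (iii) If $e=d$ and $\mu(d,e;m)(a)>\sqrt{a/2}$, then $\langle\varepsilon,\varepsilon\rangle<1$; if $e=d-1$ and $\mu(d,e;m)(a)>\sqrt{a/2}$, then $\langle\varepsilon,\varepsilon\rangle<\frac12$. (iv) The sum of all entries of $\varepsilon$ satisfies $-\sum_i\varepsilon_i=\frac{d+e}{\sqrt{2a}}\left(y(a)-\frac1q\right)+1$, where $y(a):=a+1-2\sqrt{2a}$.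
   Context: Weight expansion: for rational $a=p/q\geq1$ in lowest terms with continued fraction $[l_0;l_1,\dots,l_N]$ ($l_N\geq2$ if $N\geq1$), $w(a)=(1^{\times l_0},x_1^{\times l_1},\dots,x_N^{\times l_N})$ with $x_0=1$, $x_1=a-l_0$, $x_i=x_{i-2}-l_{i-1}x_{i-1}$; $x^{\times l}$ is $x$ repeated $l$ times. The set $\mathcal{E}$: a Cremona transform of an integer tuple $(\delta;n_1,\dots,n_k)$ with $n_1\geq\dots\geq n_k$ is $(2\delta-n_1-n_2-n_3;\delta-n_2-n_3,\delta-n_1-n_3,\delta-n_1-n_2,n_4,\dots,n_k)$; a Cremona move is a Cremona transform followed by a permutation of the entries after the semicolon. $\mathcal{E}$ consists of $(0,0;-1)$ together with all integer tuples $(d,e;m_1,\dots,m_M)$ with $d,e\geq0$, $m_1\geq\dots\geq m_M\geq0$, satisfying $\sum m_i=2(d+e)-1$, $\sum m_i^2=2de+1$, and such that $(d+e-m_1;d-m_1,e-m_1,m_2,\dots,m_M)$ reduces to $(0;-1,0,\dots,0)$ by repeated Cremona moves. $\mu(d,e;m)(a):=\langle m,w(a)\rangle/(d+e)$, with $\langle\cdot,\cdot\rangle$ the Euclidean scalar product after padding with zeros. *)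

theory Defs
  imports Complex_Main "HOL-Library.Multiset"
begin

text \<open>Continued fraction [l_0; l_1, ..., l_N] of p/q via the Euclidean algorithm.
  For coprime p, q with q > 0 this is the expansion with l_N >= 2 if N >= 1.\<close>
function cf_nat :: "nat \<Rightarrow> nat \<Rightarrow> nat list" where
  "cf_nat p q = (if q = 0 then [] else (p div q) # cf_nat q (p mod q))"
  by auto
termination by (relation "measure snd") auto

declare cf_nat.simps[simp del]

definition cf :: "rat \<Rightarrow> nat list" where
  "cf a = (case quotient_of a of (p, q) \<Rightarrow> cf_nat (nat p) (nat q))"

fun wx :: "real \<Rightarrow> nat list \<Rightarrow> nat \<Rightarrow> real" where
  "wx a ls 0 = 1"
| "wx a ls (Suc 0) = a - real (ls ! 0)"
| "wx a ls (Suc (Suc i)) = wx a ls i - real (ls ! Suc i) * wx a ls (Suc i)"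

definition weight_exp :: "rat \<Rightarrow> real list" where
  "weight_exp a = (let ls = cf a in
     concat (map (\<lambda>i. replicate (ls ! i) (wx (real_of_rat a) ls i)) [0..<length ls]))"

definition pad_nth :: "real list \<Rightarrow> nat \<Rightarrow> real" where
  "pad_nth xs i = (if i < length xs then xs ! i else 0)"

definition inner_pad :: "real list \<Rightarrow> real list \<Rightarrow> real" where
  "inner_pad xs ys = (\<Sum>i < max (length xs) (length ys). pad_nth xs i * pad_nth ys i)"

definition cremona_transform :: "int \<times> int list \<Rightarrow> int \<times> int list" where
  "cremona_transform t = (case t of (\<delta>, n) \<Rightarrow>
     (2*\<delta> - n!0 - n!1 - n!2,
      [\<delta> - n!1 - n!2, \<delta> - n!0 - n!2, \<delta> - n!0 - n!1] @ drop 3 n))"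

text \<open>A Cremona move (transform followed by permutation) is a composite of such steps.\<close>
inductive cremona_step :: "int \<times> int list \<Rightarrow> int \<times> int list \<Rightarrow> bool" where
  perm: "mset (n'::int list) = mset n \<Longrightarrow> cremona_step (\<delta>, n) (\<delta>, n')"
| transf: "sorted_wrt (\<ge>) (n::int list) \<Longrightarrow> length n \<ge> 3 \<Longrightarrow> cremona_step (\<delta>, n) (cremona_transform (\<delta>, n))"

definition cremona_reduces :: "int \<times> int list \<Rightarrow> bool" where
  "cremona_reduces t \<longleftrightarrow> cremona_step\<^sup>*\<^sup>* t (0, (-1) # replicate (length (snd t) - 1) 0)"

definition classE :: "(int \<times> int \<times> int list) set" where
  "classE = {(0, 0, [-1])} \<union>
     {(d, e, m). d \<ge> 0 \<and> e \<ge> 0 \<and> m \<noteq> [] \<and> sorted_wrt (\<ge>) m \<and> (\<forall>x\<in>set m. x \<ge> 0) \<and>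
        sum_list m = 2*(d+e) - 1 \<and> sum_list (map (\<lambda>x. x^2) m) = 2*d*e + 1 \<and>
        cremona_reduces (d + e - m!0, [d - m!0, e - m!0] @ tl m)}"

definition mu :: "int \<Rightarrow> int \<Rightarrow> int list \<Rightarrow> rat \<Rightarrow> real" where
  "mu d e m a = inner_pad (map real_of_int m) (weight_exp a) / real_of_int (d + e)"

definition err_vec :: "int \<Rightarrow> int \<Rightarrow> int list \<Rightarrow> rat \<Rightarrow> real list" where
  "err_vec d e m a =
     (let w = weight_exp a; m' = map real_of_int m;
          c = real_of_int (d + e) / sqrt (2 * real_of_rat a)
      in map (\<lambda>i. pad_nth m' i - c * pad_nth w i) [0..<max (length m') (length w)])"

definition yfun :: "real \<Rightarrow> real" where
  "yfun a = a + 1 - 2 * sqrt (2 * a)"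

end

theory Submission imports Defs "HOL-Analysis.Convex" begin

fun rs :: "nat \<Rightarrow> nat \<Rightarrow> nat \<Rightarrow> nat" where
  "rs p q 0 = p"
| "rs p q (Suc k) = rs q (p mod q) k"

lemma rs_1[simp]: "rs p q (Suc 0) = q" by simp

lemma rs_SS: "rs p q (Suc (Suc k)) = rs p q k mod rs p q (Suc k)"
  by (induction k arbitrary: p q) auto

lemma cf_nat_nth: "k < length (cf_nat p q) \<Longrightarrow> cf_nat p q ! k = rs p q k div rs p q (Suc k)"
proof (induction p q arbitrary: k rule: cf_nat.induct)
  case (1 p q)
  show ?case
  proof (cases "q = 0")
    case True then show ?thesis using 1(2) by (simp add: cf_nat.simps)
  next
    case False
    then have e: "cf_nat p q = (p div q) # cf_nat q (p mod q)" by (simp add: cf_nat.simps)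
    show ?thesis
    proof (cases k)
      case 0 then show ?thesis using e by simp
    next
      case (Suc j) then show ?thesis using e 1 False by simp
    qed
  qed
qed

lemma cf_nat_pos: "k < length (cf_nat p q) \<Longrightarrow> rs p q (Suc k) > 0"
proof (induction p q arbitrary: k rule: cf_nat.induct)
  case (1 p q)
  show ?case
  proof (cases "q = 0")
    case True then show ?thesis using 1(2) by (simp add: cf_nat.simps)
  next
    case False
    then have e: "cf_nat p q = (p div q) # cf_nat q (p mod q)" by (simp add: cf_nat.simps)
    show ?thesis
    proof (cases k)
      case 0 then show ?thesis using e False by simp
    next
      case (Suc j) then show ?thesis using e 1 False by simp
    qed
  qed
qed

lemma cf_nat_end: "rs p q (Suc (length (cf_nat p q))) = 0 \<and> gcd (rs p q (length (cf_nat p q))) 0 = gcd p q"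
proof (induction p q rule: cf_nat.induct)
  case (1 p q)
  show ?case
  proof (cases "q = 0")
    case True then show ?thesis by (simp add: cf_nat.simps)
  next
    case False
    then have e: "cf_nat p q = (p div q) # cf_nat q (p mod q)" by (simp add: cf_nat.simps)
    show ?thesis using e 1 False by (simp add: gcd_red_nat[symmetric] gcd.commute)
  qed
qed

lemma telesc2: "n \<le> length (cf_nat p q) \<Longrightarrow>
   (\<Sum>k<n. (cf_nat p q ! k) * rs p q (Suc k) ^ 2) + rs p q n * rs p q (Suc n) = p * q"
proof (induction n)
  case 0 then show ?case by simp
next
  case (Suc n)
  have l: "n < length (cf_nat p q)" using Suc by simp
  have "rs p q n = (rs p q n div rs p q (Suc n)) * rs p q (Suc n) + rs p q (Suc (Suc n))"
    by (simp only: rs_SS div_mult_mod_eq)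
  then have "rs p q n * rs p q (Suc n) = (cf_nat p q ! n) * rs p q (Suc n) ^ 2 + rs p q (Suc n) * rs p q (Suc (Suc n))"
    by (metis cf_nat_nth[OF l] add_mult_distrib power2_eq_square mult.assoc mult.commute)
  then show ?case using Suc by simp
qed

lemma telesc1: "n \<le> length (cf_nat p q) \<Longrightarrow>
   (\<Sum>k<n. (cf_nat p q ! k) * rs p q (Suc k)) + rs p q n + rs p q (Suc n) = p + q"
proof (induction n)
  case 0 then show ?case by simp
next
  case (Suc n)
  have l: "n < length (cf_nat p q)" using Suc by simp
  have "rs p q n = (rs p q n div rs p q (Suc n)) * rs p q (Suc n) + rs p q (Suc (Suc n))"
    by (simp only: rs_SS div_mult_mod_eq)
  then show ?case using Suc cf_nat_nth[OF l] by simp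
qed

lemma cf_nat_len: "Q > 0 \<Longrightarrow> length (cf_nat P Q) \<ge> 1"
  by (subst cf_nat.simps) simp

lemma wx_rs:
  assumes Q: "Q > 0"
  shows "i \<le> length (cf_nat P Q) \<Longrightarrow> wx (real P / real Q) (cf_nat P Q) i = real (rs P Q (Suc i)) / real Q"
proof (induction i rule: nat_less_induct)
  case (1 n)
  show ?case
  proof (cases n)
    case 0 then show ?thesis using Q by simp
  next
    case (Suc j)
    note S = Suc
    show ?thesis
    proof (cases j)
      case 0
      have l: "0 < length (cf_nat P Q)" using cf_nat_len[OF Q, of P] by linarith
      have "real P = real (P div Q) * real Q + real (P mod Q)"
        by (metis div_mult_mod_eq of_nat_add of_nat_mult)
      then show ?thesis using Q S 0 cf_nat_nth[OF l]
        by (simp add: field_simps)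
    next
      case (Suc k)
      have l: "Suc k < length (cf_nat P Q)" using 1(2) S Suc by simp
      have ih1: "wx (real P / real Q) (cf_nat P Q) k = real (rs P Q (Suc k)) / real Q"
        using 1 S Suc by simp
      have ih2: "wx (real P / real Q) (cf_nat P Q) (Suc k) = real (rs P Q (Suc (Suc k))) / real Q"
        using 1 S Suc by simp
      have m: "real (rs P Q (Suc k)) = real (rs P Q (Suc k) div rs P Q (Suc (Suc k))) * real (rs P Q (Suc (Suc k))) + real (rs P Q (Suc (Suc (Suc k))))"
        by (metis div_mult_mod_eq of_nat_add of_nat_mult rs_SS)
      show ?thesis using S Suc ih1 ih2 cf_nat_nth[OF l] m Q
        by (simp del: rs.simps add: field_simps)
    qed
  qed
qed

lemma sum_concat_rep: "sum_list (concat (map (\<lambda>i. replicate (ls ! i) (f i)) [0..<n])) = (\<Sum>i<n. real (ls ! i) * f i)"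
  by (induction n) (auto simp: sum_list_replicate)

lemma sumsq_concat_rep: "sum_list (map (\<lambda>t. t^2) (concat (map (\<lambda>i. replicate (ls ! i) (f i)) [0..<n]))) = (\<Sum>i<n. real (ls ! i) * (f i)^2)"
  by (induction n) (auto simp: sum_list_replicate)

lemma set_concat_rep: "x \<in> set (concat (map (\<lambda>i. replicate (ls ! i) (f i)) [0..<n])) \<Longrightarrow> \<exists>i<n. x = f i"
  by auto

lemma pad_zero: "length xs \<le> i \<Longrightarrow> pad_nth xs i = 0"
  by (simp add: pad_nth_def)

lemma inner_pad_N: "length xs \<le> N \<Longrightarrow> length ys \<le> N \<Longrightarrow>
   inner_pad xs ys = (\<Sum>i<N. pad_nth xs i * pad_nth ys i)"
  unfolding inner_pad_def
  by (rule sum.mono_neutral_left) (auto simp: pad_zero)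

lemma sum_list_N: "length xs \<le> N \<Longrightarrow> sum_list xs = (\<Sum>i<N. pad_nth xs i)"
proof -
  assume h: "length xs \<le> N"
  have "sum_list xs = (\<Sum>i<length xs. pad_nth xs i)"
    by (simp add: sum_list_sum_nth pad_nth_def atLeast0LessThan)
  also have "\<dots> = (\<Sum>i<N. pad_nth xs i)"
    using h by (intro sum.mono_neutral_left) (auto simp: pad_zero)
  finally show ?thesis .
qed

lemma sumsq_N: "length xs \<le> N \<Longrightarrow> sum_list (map (\<lambda>t. t^2) xs) = (\<Sum>i<N. (pad_nth xs i)^2)"
proof -
  assume h: "length xs \<le> N"
  have "sum_list (map (\<lambda>t. t^2) xs) = (\<Sum>i<length xs. (pad_nth xs i)^2)"
    by (simp add: sum_list_sum_nth pad_nth_def atLeast0LessThan)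
  also have "\<dots> = (\<Sum>i<N. (pad_nth xs i)^2)"
    using h by (intro sum.mono_neutral_left) (auto simp: pad_zero)
  finally show ?thesis .
qed

lemma err_len: "length (err_vec d e m a) = max (length m) (length (weight_exp a))"
  by (simp add: err_vec_def Let_def)

lemma err_nth: "pad_nth (err_vec d e m a) i = pad_nth (map real_of_int m) i
   - real_of_int (d + e) / sqrt (2 * real_of_rat a) * pad_nth (weight_exp a) i"
  by (auto simp: err_vec_def Let_def pad_nth_def)

lemma classE_facts:
  assumes "(d, e, m) \<in> classE"
  shows "d \<ge> 0 \<and> e \<ge> 0 \<and> sum_list m = 2*(d+e) - 1 \<and> sum_list (map (\<lambda>x. x^2) m) = 2*d*e + 1
     \<and> (d + e = 0 \<longrightarrow> m = [-1])"
proof -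
  consider "(d,e,m) = (0,0,[-1])" | "d \<ge> 0 \<and> e \<ge> 0 \<and> (\<forall>x\<in>set m. x \<ge> 0) \<and>
        sum_list m = 2*(d+e) - 1 \<and> sum_list (map (\<lambda>x. x^2) m) = 2*d*e + 1"
    using assms unfolding classE_def by blast
  then show ?thesis
  proof cases
    case 1 then show ?thesis by simp
  next
    case 2
    then have "sum_list m \<ge> 0" by (intro sum_list_nonneg) blast
    then show ?thesis using 2 by auto
  qed
qed

lemma weight_facts:
  fixes p q :: int and a :: rat
  assumes "q > 0" and "coprime p q" and "a = of_int p / of_int q" and "a \<ge> 1"
  shows "sum_list (map (\<lambda>t. t^2) (weight_exp a)) = real_of_rat a
    \<and> sum_list (weight_exp a) = real_of_rat a + 1 - 1 / real_of_int q
    \<and> (\<forall>x\<in>set (weight_exp a). x \<ge> 0)"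
proof -
  have "real_of_rat a \<ge> 1" using assms(4) by (metis of_rat_1 of_rat_less_eq)
  then have pq: "p \<ge> q" using assms(1,3) by (simp add: of_rat_divide field_simps)
  define P where "P = nat p"
  define Q where "Q = nat q"
  have pP: "p = int P" and qQ: "q = int Q" using pq assms(1) by (auto simp: P_def Q_def)
  have Q0: "Q > 0" using assms(1) qQ by simp
  have cop: "coprime P Q" using assms(2) by (simp add: pP qQ coprime_int_iff)
  have "quotient_of a = (p, q)"
    using assms(1,2,3) by (simp add: Fract_of_int_quotient[symmetric] quotient_of_Fract)
  then have cfa: "cf a = cf_nat P Q" by (simp add: cf_def P_def Q_def)
  have A: "real_of_rat a = real P / real Q" using assms(3) by (simp add: of_rat_divide pP qQ)
  define ls where "ls = cf_nat P Q"
  define n where "n = length ls"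
  have we: "weight_exp a = concat (map (\<lambda>i. replicate (ls ! i) (wx (real P / real Q) ls i)) [0..<n])"
    by (simp add: weight_exp_def cfa A ls_def n_def Let_def)
  have wxi: "\<And>i. i < n \<Longrightarrow> wx (real P / real Q) ls i = real (rs P Q (Suc i)) / real Q"
    using wx_rs[OF Q0] by (simp add: ls_def n_def)
  have e2: "rs P Q (Suc n) = 0" and g: "gcd (rs P Q n) 0 = gcd P Q"
    using cf_nat_end[of P Q] by (auto simp: ls_def n_def)
  have rn: "rs P Q n = 1" using g cop by simp
  have t2: "(\<Sum>k<n. (ls ! k) * rs P Q (Suc k) ^ 2) = P * Q"
    using telesc2[of n P Q] e2 by (simp add: ls_def n_def)
  have t1: "(\<Sum>k<n. (ls ! k) * rs P Q (Suc k)) + 1 = P + Q"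
    using telesc1[of n P Q] e2 rn by (simp add: ls_def n_def)
  have s2: "sum_list (map (\<lambda>t. t^2) (weight_exp a)) = (\<Sum>i<n. real (ls ! i) * (real (rs P Q (Suc i)) / real Q)^2)"
    unfolding we sumsq_concat_rep using wxi by (intro sum.cong) auto
  also have "\<dots> = (\<Sum>i<n. real ((ls ! i) * rs P Q (Suc i) ^ 2)) / real Q ^ 2"
    by (simp add: sum_divide_distrib power_divide)
  also have "\<dots> = real_of_rat a"
    unfolding of_nat_sum[symmetric] t2 A using Q0 by (simp add: power2_eq_square)
  finally have r1: "sum_list (map (\<lambda>t. t^2) (weight_exp a)) = real_of_rat a" .
  have "sum_list (weight_exp a) = (\<Sum>i<n. real (ls ! i) * (real (rs P Q (Suc i)) / real Q))"
    unfolding we sum_concat_rep using wxi by (intro sum.cong) auto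
  also have "\<dots> = (\<Sum>i<n. real ((ls ! i) * rs P Q (Suc i))) / real Q"
    by (simp add: sum_divide_distrib)
  also have "\<dots> = (real P + real Q - 1) / real Q"
  proof -
    have "real (\<Sum>k<n. (ls ! k) * rs P Q (Suc k)) = real P + real Q - 1"
      using arg_cong[OF t1, of real] by simp
    then show ?thesis by simp
  qed
  also have "\<dots> = real_of_rat a + 1 - 1 / real_of_int q"
    unfolding A qQ using Q0 by (simp add: field_simps)
  finally have r2: "sum_list (weight_exp a) = real_of_rat a + 1 - 1 / real_of_int q" .
  have r3: "\<forall>x\<in>set (weight_exp a). x \<ge> 0"
  proof
    fix x assume "x \<in> set (weight_exp a)"
    then obtain i where "i < n" "x = wx (real P / real Q) ls i" unfolding we by auto
    then show "x \<ge> 0" using wxi by simp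
  qed
  show ?thesis using r1 r2 r3 by blast
qed



lemma sqrt_div_pos: "(k::real) > 0 \<Longrightarrow> sqrt X / k = sqrt (X / k^2)"
  by (simp add: real_sqrt_divide)

lemma alg:
  fixes d e :: int and A c MM MW WW SM SW q :: real
  assumes A1: "A \<ge> 1" and d0: "d \<ge> 0" and e0: "e \<ge> 0" and MM: "MM = real_of_int (2*d*e + 1)"
    and SM: "SM = real_of_int (2*(d+e) - 1)" and WW: "WW = A" and SW: "SW = A + 1 - 1/q"
    and CS: "MW^2 \<le> MM * WW" and c: "c = real_of_int (d+e) / sqrt (2*A)"
    and neg: "d + e = 0 \<longrightarrow> MW \<le> 0"
  shows "(MW / real_of_int (d+e) \<le> sqrt (real_of_int (2*d*e + 1)) * sqrt A / real_of_int (d + e)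
         \<and> (e = d \<longrightarrow> MW / real_of_int (d+e) \<le> sqrt (1 + 1 / (2 * real_of_int d ^ 2)) * sqrt (A / 2))
         \<and> (e = d - 1 \<longrightarrow> MW / real_of_int (d+e) \<le> sqrt (1 + 1 / (2 * real_of_int d - 1) ^ 2) * sqrt (A / 2)))
       \<and> (MW / real_of_int (d+e) > sqrt (A / 2) \<longleftrightarrow> MW - c * WW > 0)
       \<and> (e = d \<and> MW / real_of_int (d+e) > sqrt (A / 2) \<longrightarrow> MM - 2*c*MW + c^2*WW < 1)
       \<and> (e = d - 1 \<and> MW / real_of_int (d+e) > sqrt (A / 2) \<longrightarrow> MM - 2*c*MW + c^2*WW < 1/2)
       \<and> (- (SM - c * SW) = real_of_int (d + e) / sqrt (2 * A) * (A + 1 - 2 * sqrt (2 * A) - 1 / q) + 1)"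
proof -
  define t where "t = sqrt (2*A)"
  define D where "D = real_of_int (d+e)"
  have t0: "t > 0" using A1 by (simp add: t_def)
  have t2: "t^2 = 2*A" using A1 by (simp add: t_def)
  have h: "sqrt (A/2) = t/2"
    using t0 t2 by (intro real_sqrt_unique) (auto simp: power_divide)
  have D0: "D \<ge> 0" using d0 e0 by (simp add: D_def)
  have MW1: "MW \<le> sqrt MM * sqrt A"
  proof -
    have "MW \<le> sqrt (MM * A)" using CS WW by (intro real_le_rsqrt) simp
    then show ?thesis by (simp add: real_sqrt_mult)
  qed
  have cD: "c = D / t" by (simp add: c D_def t_def)
  have MMge: "MM \<ge> 0" using MM d0 e0 by simp
  have i1: "MW / D \<le> sqrt MM * sqrt A / D"
    using MW1 D0 by (simp add: divide_right_mono)
  have i2: "e = d \<longrightarrow> MW / D \<le> sqrt (1 + 1 / (2 * real_of_int d ^ 2)) * sqrt (A / 2)"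
  proof
    assume ed: "e = d"
    show "MW / D \<le> sqrt (1 + 1 / (2 * real_of_int d ^ 2)) * sqrt (A / 2)"
    proof (cases "D = 0")
      case True then show ?thesis using A1 by (simp add: mult_nonneg_nonneg)
    next
      case False
      then have Dp: "D > 0" using D0 by simp
      have "sqrt MM * sqrt A / D = sqrt (MM * A / D^2)"
        by (metis sqrt_div_pos[OF Dp] real_sqrt_mult)
      also have "MM * A / D^2 = (1 + 1 / (2 * real_of_int d ^ 2)) * (A / 2)"
        using Dp unfolding MM D_def ed by (simp add: field_simps power2_eq_square)
      finally show ?thesis using i1 real_sqrt_mult[of "1 + 1 / (2 * real_of_int d ^ 2)" "A/2"] by simp
    qed
  qed
  have i3: "e = d - 1 \<longrightarrow> MW / D \<le> sqrt (1 + 1 / (2 * real_of_int d - 1) ^ 2) * sqrt (A / 2)"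
  proof
    assume ed: "e = d - 1"
    then have Dp: "D > 0" using e0 D_def by simp
    have "sqrt MM * sqrt A / D = sqrt (MM * A / D^2)"
      by (metis sqrt_div_pos[OF Dp] real_sqrt_mult)
    also have "MM * A / D^2 = (1 + 1 / (2 * real_of_int d - 1) ^ 2) * (A / 2)"
    proof -
      have k: "2 * real_of_int d - 1 \<noteq> 0" using Dp ed D_def by simp
      have DD: "D = 2 * real_of_int d - 1" using ed D_def by simp
      have MM': "MM = ((2 * real_of_int d - 1)^2 + 1) / 2" unfolding MM ed by (simp add: power2_eq_square algebra_simps)
      show ?thesis unfolding DD MM' using k by (simp add: field_simps)
    qed
    finally show "MW / D \<le> sqrt (1 + 1 / (2 * real_of_int d - 1) ^ 2) * sqrt (A / 2)"
      using i1 real_sqrt_mult[of "1 + 1 / (2 * real_of_int d - 1) ^ 2" "A/2"] by simp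
  qed
  have cW: "c * WW = D * t / 2"
  proof -
    have "c * WW = c * t * t / 2" using t2 WW by (simp add: power2_eq_square)
    also have "\<dots> = D * t / 2" using cD t0 by simp
    finally show ?thesis .
  qed
  have ii: "MW / D > t/2 \<longleftrightarrow> MW - c * WW > 0"
  proof (cases "D = 0")
    case True
    then have "d + e = 0" by (simp add: D_def)
    then show ?thesis using True neg t0 cD by simp
  next
    case False
    then have Dp: "D > 0" using D0 by simp
    have "MW / D > t/2 \<longleftrightarrow> MW > D * t / 2" using Dp by (simp add: field_simps)
    then show ?thesis using cW by linarith
  qed
  have iii: "MW / D > t/2 \<longrightarrow> MM - 2*c*MW + c^2*WW < MM - D^2/2"
  proof
    assume a: "MW / D > t/2"
    then have Dp: "D > 0" using D0 t0 by (cases "D = 0") auto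
    have m: "MW > D * t / 2" using a Dp by (simp add: field_simps)
    have "c^2 * WW = D^2 / 2"
    proof -
      have "c^2 * WW = (c * t) * (c * t) / 2" using t2 WW by (simp add: power2_eq_square algebra_simps)
      also have "\<dots> = D^2 / 2" using cD t0 by (simp add: power2_eq_square)
      finally show ?thesis .
    qed
    moreover have "2*c*MW > D^2"
    proof -
      have cp: "2*c > 0" using cD Dp t0 by simp
      have "2*c*MW > 2*c*(D*t/2)" using mult_strict_left_mono[OF m cp] by simp
      also have "2*c*(D*t/2) = D^2" using cD t0 by (simp add: power2_eq_square)
      finally show ?thesis by simp
    qed
    ultimately show "MM - 2*c*MW + c^2*WW < MM - D^2/2" by simp
  qed
  have iv: "- (SM - c * SW) = D / t * (A + 1 - 2 * t - 1 / q) + 1"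
    using t0 unfolding SM SW cD D_def by (simp add: field_simps)
  have f1: "e = d \<longrightarrow> MM - D^2/2 = 1" unfolding MM D_def by (simp add: power2_eq_square algebra_simps)
  have f2: "e = d - 1 \<longrightarrow> MM - D^2/2 = 1/2"
  proof
    assume h: "e = d - 1"
    show "MM - D^2/2 = 1/2" unfolding MM D_def h by (simp add: power2_eq_square field_simps)
  qed
  have i2': "e = d \<longrightarrow> MW / D \<le> sqrt (1 + 1 / (2 * real_of_int d ^ 2)) * (t / 2)" using i2 h by simp
  have i3': "e = d - 1 \<longrightarrow> MW / D \<le> sqrt (1 + 1 / (2 * real_of_int d - 1) ^ 2) * (t / 2)" using i3 h by simp
  show ?thesis
    unfolding h t_def[symmetric] D_def[symmetric] MM[symmetric]
    using i1 i2' i3' ii iii iv f1 f2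
    by (intro conjI; (elim conjE)?; argo)
qed

theorem lemma4p8:
  fixes p q d e :: int and m :: "int list" and a :: rat
  assumes "q > 0" and "coprime p q" and "a = of_int p / of_int q" and "a \<ge> 1"
    and "(d, e, m) \<in> classE"
  shows "(mu d e m a \<le> sqrt (real_of_int (2*d*e + 1)) * sqrt (real_of_rat a) / real_of_int (d + e)
         \<and> (e = d \<longrightarrow> mu d e m a \<le> sqrt (1 + 1 / (2 * real_of_int d ^ 2)) * sqrt (real_of_rat a / 2))
         \<and> (e = d - 1 \<longrightarrow> mu d e m a \<le> sqrt (1 + 1 / (2 * real_of_int d - 1) ^ 2) * sqrt (real_of_rat a / 2)))
       \<and> (mu d e m a > sqrt (real_of_rat a / 2) \<longleftrightarrow> inner_pad (err_vec d e m a) (weight_exp a) > 0)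
       \<and> (e = d \<and> mu d e m a > sqrt (real_of_rat a / 2) \<longrightarrow> inner_pad (err_vec d e m a) (err_vec d e m a) < 1)
       \<and> (e = d - 1 \<and> mu d e m a > sqrt (real_of_rat a / 2) \<longrightarrow> inner_pad (err_vec d e m a) (err_vec d e m a) < 1/2)
       \<and> (- sum_list (err_vec d e m a) =
           real_of_int (d + e) / sqrt (2 * real_of_rat a) * (yfun (real_of_rat a) - 1 / real_of_int q) + 1)"
proof -
  define A where "A = real_of_rat a"
  define mr where "mr = map real_of_int m"
  define w where "w = weight_exp a"
  define L where "L = max (length mr) (length w)"
  define c where "c = real_of_int (d + e) / sqrt (2 * A)"
  define M where "M = pad_nth mr"
  define W where "W = pad_nth w"
  have A1: "A \<ge> 1" using assms(4) unfolding A_def by (metis of_rat_1 of_rat_less_eq)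
  have cf: "d \<ge> 0 \<and> e \<ge> 0 \<and> sum_list m = 2*(d+e) - 1 \<and> sum_list (map (\<lambda>x. x^2) m) = 2*d*e + 1
     \<and> (d + e = 0 \<longrightarrow> m = [-1])" using classE_facts[OF assms(5)] .
  have wf: "sum_list (map (\<lambda>t. t^2) w) = A \<and> sum_list w = A + 1 - 1 / real_of_int q
    \<and> (\<forall>x\<in>set w. x \<ge> 0)" using weight_facts[OF assms(1-4)] unfolding A_def w_def .
  have lm: "length mr \<le> L" and lw: "length w \<le> L" by (auto simp: L_def)
  have le: "length (err_vec d e m a) \<le> L" by (simp add: err_len L_def mr_def w_def)
  have en: "\<And>i. pad_nth (err_vec d e m a) i = M i - c * W i"
    by (simp add: err_nth M_def W_def mr_def w_def c_def A_def)
  define MM where "MM = (\<Sum>i<L. M i ^ 2)"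
  define MW where "MW = (\<Sum>i<L. M i * W i)"
  define WW where "WW = (\<Sum>i<L. W i ^ 2)"
  define SM where "SM = (\<Sum>i<L. M i)"
  define SW where "SW = (\<Sum>i<L. W i)"
  have MMv: "MM = real_of_int (2*d*e + 1)"
  proof -
    have "MM = sum_list (map (\<lambda>t. t^2) mr)" unfolding MM_def M_def using sumsq_N[OF lm] by simp
    also have "\<dots> = real_of_int (sum_list (map (\<lambda>x. x^2) m))"
      unfolding mr_def by (simp add: o_def sum_list_of_int[symmetric])
    finally show ?thesis using cf by simp
  qed
  have SMv: "SM = real_of_int (2*(d+e) - 1)"
  proof -
    have "SM = sum_list mr" unfolding SM_def M_def using sum_list_N[OF lm] by simp
    also have "\<dots> = real_of_int (sum_list m)" unfolding mr_def by (simp add: sum_list_of_int)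
    finally show ?thesis using cf by simp
  qed
  have WWv: "WW = A" unfolding WW_def W_def using sumsq_N[OF lw] wf by simp
  have SWv: "SW = A + 1 - 1 / real_of_int q" unfolding SW_def W_def using sum_list_N[OF lw] wf by simp
  have CS: "MW^2 \<le> MM * WW" unfolding MW_def MM_def WW_def by (rule Cauchy_Schwarz_ineq_sum)
  have neg: "d + e = 0 \<longrightarrow> MW \<le> 0"
  proof
    assume "d + e = 0"
    then have m1: "m = [-1]" using cf by simp
    have "M i * W i \<le> 0" for i
    proof -
      have "W i \<ge> 0" unfolding W_def pad_nth_def using wf nth_mem by auto
      moreover have "M i \<le> 0" unfolding M_def pad_nth_def mr_def m1 by simp
      ultimately show ?thesis by (simp add: mult_nonpos_nonneg)
    qed
    then show "MW \<le> 0" unfolding MW_def by (simp add: sum_nonpos)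
  qed
  have muv: "mu d e m a = MW / real_of_int (d + e)"
    unfolding mu_def MW_def M_def W_def using inner_pad_N[OF lm lw] by (simp add: mr_def w_def)
  have EW: "inner_pad (err_vec d e m a) (weight_exp a) = MW - c * WW"
  proof -
    have "inner_pad (err_vec d e m a) (weight_exp a) = (\<Sum>i<L. (M i - c * W i) * W i)"
      using inner_pad_N[OF le lw] en by (simp add: w_def W_def)
    also have "\<dots> = MW - c * WW" unfolding MW_def WW_def
      by (simp add: algebra_simps sum_subtractf sum_distrib_left power2_eq_square)
    finally show ?thesis .
  qed
  have EE: "inner_pad (err_vec d e m a) (err_vec d e m a) = MM - 2*c*MW + c^2*WW"
  proof -
    have "inner_pad (err_vec d e m a) (err_vec d e m a) = (\<Sum>i<L. (M i - c * W i) * (M i - c * W i))"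
      using inner_pad_N[OF le le] en by simp
    also have "\<dots> = MM - 2*c*MW + c^2*WW" unfolding MM_def MW_def WW_def
      by (simp add: algebra_simps sum_subtractf sum.distrib sum_distrib_left power2_eq_square)
    finally show ?thesis .
  qed
  have SE: "sum_list (err_vec d e m a) = SM - c * SW"
  proof -
    have "sum_list (err_vec d e m a) = (\<Sum>i<L. M i - c * W i)"
      using sum_list_N[OF le] en by simp
    also have "\<dots> = SM - c * SW" unfolding SM_def SW_def
      by (simp add: sum_subtractf sum_distrib_left)
    finally show ?thesis .
  qed
  have "yfun A = A + 1 - 2 * sqrt (2 * A)" by (simp add: yfun_def)
  have r: ?thesis if "(MW / real_of_int (d+e) \<le> sqrt (real_of_int (2*d*e + 1)) * sqrt A / real_of_int (d + e)
         \<and> (e = d \<longrightarrow> MW / real_of_int (d+e) \<le> sqrt (1 + 1 / (2 * real_of_int d ^ 2)) * sqrt (A / 2))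
         \<and> (e = d - 1 \<longrightarrow> MW / real_of_int (d+e) \<le> sqrt (1 + 1 / (2 * real_of_int d - 1) ^ 2) * sqrt (A / 2)))
       \<and> (MW / real_of_int (d+e) > sqrt (A / 2) \<longleftrightarrow> MW - c * WW > 0)
       \<and> (e = d \<and> MW / real_of_int (d+e) > sqrt (A / 2) \<longrightarrow> MM - 2*c*MW + c^2*WW < 1)
       \<and> (e = d - 1 \<and> MW / real_of_int (d+e) > sqrt (A / 2) \<longrightarrow> MM - 2*c*MW + c^2*WW < 1/2)
       \<and> (- (SM - c * SW) = real_of_int (d + e) / sqrt (2 * A) * (A + 1 - 2 * sqrt (2 * A) - 1 / real_of_int q) + 1)"
    using that unfolding muv EW EE SE yfun_def A_def[symmetric] .
  show ?thesis
    apply (rule r)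
    apply (rule alg[OF A1 _ _ MMv SMv WWv SWv CS c_def neg])
    using cf by auto
qed

end
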